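(* Fix real numbers $\mu_D$, $\sigma_D>0$, $\mu_L>0$, $\sigma_L>0$, an odd integer $n\ge1$ and an integer $m\ge1$, and let $B(\rho)$ be the function defined in the context. Then $B(0)\le\lim_{\rho\to-1^+}B(\rho)$ if and only if $$m\ge\frac{\sigma_L\sqrt{\sigma_L^2+4n\mu_L(\mu_L+n)}-\sigma_L^2}{2\mu_L(\mu_L+n)}.$$ Moreover, if $n\ge3$ is odd and this inequality holds, then $B$ has at least one stationary point (a point where $B'=0$) in the interval $(-1,0)$.
   Context: For fixed real parameters $\mu_D$, $\sigma_D>0$, $\mu_L\ge0$, $\sigma_L\ge0$ and integers $n,m\ge1$, define for $\rho\in(-1,1)$ $$B(\rho)=\frac{2\sigma_L^2}{n^2m^2}\left(m(1-\rho^n)+\frac{n(1+\rho)}{1-\rho}-\frac{(1+\rho^2)(1-\rho^n)}{(1-\rho)^2}\right)+\frac{2\sigma_L^2\mu_D^2}{\sigma_D^2 m^2}+\left(\frac{2\mu_L^2}{n^2}+\frac{2\mu_L}{n}\right)(1-\rho^n)+1 .$$ (This is the bullwhip measure $\operatorname{Var}q_t/\operatorname{Var}D_t$ for AR(1) demand with autocorrelation $\rho$, mean $\mu_D$ and variance $\sigma_D^2$, i.i.d. lead times with mean $\mu_L$ and variance $\sigma_L^2$, moving-average demand forecast over $n$ periods and moving-average lead-time forecast over $m$ periods, under the order-up-to policy.) Note $B(0)$ is the bullwhip measure for i.i.d. demand. *)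

theory Defs
  imports Complex_Main
begin

text \<open>Bullwhip measure B(rho) for AR(1) demand (rho in (-1,1)).\<close>
definition bullwhip :: "real \<Rightarrow> real \<Rightarrow> real \<Rightarrow> real \<Rightarrow> nat \<Rightarrow> nat \<Rightarrow> real \<Rightarrow> real" where
  "bullwhip muD sigD muL sigL n m rho =
     2 * sigL^2 / (real n ^ 2 * real m ^ 2) *
       (real m * (1 - rho ^ n) + real n * (1 + rho) / (1 - rho)
        - (1 + rho^2) * (1 - rho ^ n) / (1 - rho)^2)
     + 2 * sigL^2 * muD^2 / (sigD^2 * real m ^ 2)
     + (2 * muL^2 / real n ^ 2 + 2 * muL / real n) * (1 - rho ^ n) + 1"

end

theory Submission
  imports Defs
begin

lemma quad_equiv:
  fixes a s m sg n :: real
  assumes a: "a > 0" and sg: "sg > 0" and n: "n > 0" and m: "m > 0"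
    and s: "s = sqrt (sg^2 + 4*n*a)"
  shows "(a*m^2 + sg^2*m - n*sg^2 \<ge> 0) \<longleftrightarrow> m \<ge> (sg*s - sg^2)/(2*a)"
proof -
  have nn: "0 \<le> sg^2 + 4*n*a" using a n by (simp add: add_nonneg_nonneg)
  have s0: "s \<ge> 0" using s nn by simp
  have s2: "s^2 = sg^2 + 4*n*a" using s nn by simp
  define r where "r = (sg*s - sg^2)/(2*a)"
  define r' where "r' = (-sg*s - sg^2)/(2*a)"
  have "sg*s \<ge> 0" using sg s0 by simp
  moreover have "sg^2 > 0" using sg by simp
  ultimately have "-sg*s - sg^2 < 0" by linarith
  then have r'neg: "r' < 0" unfolding r'_def using a
    by (intro divide_neg_pos) auto
  have sum: "r + r' = -(sg^2)/a" unfolding r_def r'_def using a by (simp add: field_simps)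
  have prod: "r * r' = -(n*sg^2)/a"
  proof -
    have "r * r' = (sg^2*sg^2 - sg^2*s^2)/(4*a^2)" unfolding r_def r'_def using a
      by (simp add: field_simps power2_eq_square)
    also have "\<dots> = -(n*sg^2)/a" using s2 a by (simp add: field_simps power2_eq_square)
    finally show ?thesis .
  qed
  have "a*(m-r)*(m-r') = a*m^2 - a*(r+r')*m + a*(r*r')" by (simp add: algebra_simps power2_eq_square)
  then have id: "a*m^2 + sg^2*m - n*sg^2 = a*(m-r)*(m-r')" using a by (simp add: sum prod)
  have pos: "a*(m-r') > 0" using a m r'neg by simp
  have "(a*m^2 + sg^2*m - n*sg^2 \<ge> 0) \<longleftrightarrow> (m - r)*(a*(m-r')) \<ge> 0"
    unfolding id by (simp only: ac_simps)
  also have "\<dots> \<longleftrightarrow> m - r \<ge> 0" using pos zero_le_mult_iff by (smt (verit))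
  finally show ?thesis unfolding r_def by simp
qed

lemma bw_cont: "x < 1 \<Longrightarrow> isCont (bullwhip muD sigD muL sigL n m) x"
  unfolding bullwhip_def by (intro continuous_intros) auto

lemma bw_diff: "x < 1 \<Longrightarrow> \<exists>D. (bullwhip muD sigD muL sigL n m has_real_derivative D) (at x)"
  unfolding bullwhip_def apply (rule exI)
  apply (rule derivative_intros | simp)+
  done

lemma bw_lim: "Lim (at_right (-1)) (bullwhip muD sigD muL sigL n m) = bullwhip muD sigD muL sigL n m (-1)"
proof -
  have "(bullwhip muD sigD muL sigL n m \<longlongrightarrow> bullwhip muD sigD muL sigL n m (-1)) (at (-1))"
    using bw_cont[of "-1"] by (simp add: isCont_def)
  then have "(bullwhip muD sigD muL sigL n m \<longlongrightarrow> bullwhip muD sigD muL sigL n m (-1)) (at_right (-1))"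
    by (simp add: filterlim_at_split)
  then show ?thesis by (intro tendsto_Lim) auto
qed

lemma bw_deriv0:
  assumes "n \<ge> 3" "m \<ge> 1" "n \<ge> 1"
  shows "(bullwhip muD sigD muL sigL n m has_real_derivative
            2 * sigL^2 / (real n ^ 2 * real m ^ 2) * (2 * real n - 2)) (at 0)"
  unfolding bullwhip_def
  apply (rule derivative_eq_intros refl | simp)+
  using assms by (simp add: field_simps power_0_left)

lemma bw_diffval:
  assumes "odd n" "n \<ge> 1" "m \<ge> 1"
  shows "bullwhip muD sigD muL sigL n m (-1) - bullwhip muD sigD muL sigL n m 0
     = 2 / (real n ^ 2 * real m ^ 2) * (muL*(muL + real n) * real m^2 + sigL^2 * real m - real n * sigL^2)"
proof -
  have m1: "(-1::real) ^ n = -1" using assms by simp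
  have z: "(0::real) ^ n = 0" using assms by simp
  show ?thesis using assms unfolding bullwhip_def m1 z
    by (simp add: field_simps power2_eq_square)
qed

theorem mainTheorem11:
  fixes muD sigD muL sigL :: real and n m :: nat
  assumes "sigD > 0" and "muL > 0" and "sigL > 0"
    and "odd n" and "n \<ge> 1" and "m \<ge> 1"
  shows "(bullwhip muD sigD muL sigL n m 0
            \<le> Lim (at_right (-1)) (bullwhip muD sigD muL sigL n m)
          \<longleftrightarrow> real m \<ge> (sigL * sqrt (sigL^2 + 4 * real n * muL * (muL + real n)) - sigL^2)
                          / (2 * muL * (muL + real n)))
       \<and> (n \<ge> 3 \<longrightarrow>
          real m \<ge> (sigL * sqrt (sigL^2 + 4 * real n * muL * (muL + real n)) - sigL^2)
                          / (2 * muL * (muL + real n)) \<longrightarrow>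
          (\<exists>rho. -1 < rho \<and> rho < 0 \<and>
             (bullwhip muD sigD muL sigL n m has_real_derivative 0) (at rho)))"
proof -
  define B where "B = bullwhip muD sigD muL sigL n m"
  define a where "a = muL*(muL + real n)"
  have apos: "a > 0" unfolding a_def using assms by simp
  have fpos: "2 / (real n ^ 2 * real m ^ 2) > 0" using assms by simp
  have key: "B 0 \<le> B (-1) \<longleftrightarrow> a * real m^2 + sigL^2 * real m - real n * sigL^2 \<ge> 0"
  proof -
    have "B 0 \<le> B (-1) \<longleftrightarrow> 0 \<le> B (-1) - B 0" by simp
    also have "\<dots> \<longleftrightarrow> 0 \<le> 2 / (real n ^ 2 * real m ^ 2) * (a * real m^2 + sigL^2 * real m - real n * sigL^2)"
      unfolding B_def a_def using bw_diffval[OF assms(4-6)] by simp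
    also have "\<dots> \<longleftrightarrow> a * real m^2 + sigL^2 * real m - real n * sigL^2 \<ge> 0"
      using fpos zero_le_mult_iff by (smt (verit))
    finally show ?thesis .
  qed
  have q: "(a * real m^2 + sigL^2 * real m - real n * sigL^2 \<ge> 0) \<longleftrightarrow>
     real m \<ge> (sigL * sqrt (sigL^2 + 4 * real n * muL * (muL + real n)) - sigL^2)
                          / (2 * muL * (muL + real n))"
  proof -
    have "4 * real n * muL * (muL + real n) = 4 * real n * a" unfolding a_def by simp
    then show ?thesis
      using quad_equiv[OF apos assms(3), of "real n" "real m" "sqrt (sigL^2 + 4 * real n * a)"] assms
      unfolding a_def by (simp add: mult.assoc)
  qed
  have part1: "B 0 \<le> Lim (at_right (-1)) B \<longleftrightarrow> real m \<ge> (sigL * sqrt (sigL^2 + 4 * real n * muL * (muL + real n)) - sigL^2)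
                          / (2 * muL * (muL + real n))"
    unfolding B_def bw_lim using key q unfolding B_def by simp
  have part2: "\<exists>rho. -1 < rho \<and> rho < 0 \<and> (B has_real_derivative 0) (at rho)"
    if n3: "n \<ge> 3" and le: "B 0 \<le> B (-1)"
  proof -
    have "(B has_real_derivative 2 * sigL^2 / (real n ^ 2 * real m ^ 2) * (2 * real n - 2)) (at 0)"
      unfolding B_def using bw_deriv0 n3 assms by simp
    moreover have "2 * sigL^2 / (real n ^ 2 * real m ^ 2) * (2 * real n - 2) > 0"
      using assms n3 by simp
    ultimately obtain d where d: "d > 0" "\<And>h. h > 0 \<Longrightarrow> h < d \<Longrightarrow> B (0 - h) < B 0"
      using DERIV_pos_inc_left by blast
    define h where "h = min (d/2) (1/2)"
    have h: "h > 0" "h < d" "h < 1" unfolding h_def using d by auto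
    have Bh: "B (-h) < B 0" using d(2)[OF h(1) h(2)] by simp
    have "\<forall>x. -1 \<le> x \<and> x \<le> 0 \<longrightarrow> isCont B x" unfolding B_def using bw_cont by auto
    then obtain M c where M: "\<And>x. -1 \<le> x \<Longrightarrow> x \<le> 0 \<Longrightarrow> M \<le> B x"
      and c: "-1 \<le> c" "c \<le> 0" "B c = M"
      using isCont_eq_Lb[of "-1" 0 B] by auto
    have "B c \<le> B (-h)" using M[of "-h"] h c by simp
    then have c1: "c \<noteq> -1" "c \<noteq> 0" using Bh le by auto
    then have cc: "-1 < c" "c < 0" using c by auto
    obtain D where D: "(B has_real_derivative D) (at c)" unfolding B_def using bw_diff cc by fastforce
    have "D = 0"
    proof (rule DERIV_local_min[OF D])
      show "0 < min (c+1) (-c)" using cc by simp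
      show "\<forall>y. \<bar>c - y\<bar> < min (c + 1) (- c) \<longrightarrow> B c \<le> B y"
        using M c by (auto simp: abs_if split: if_splits)
    qed
    then show ?thesis using D cc by auto
  qed
  show ?thesis
    using part1 part2 key q unfolding B_def bw_lim by auto
qed

end
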